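(* Let $\tilde F:\mathbb C^6\to\mathbb C^6$ be a homogeneous (polynomial, degree $p$) vector field equivariant with respect to the $[4,8]$ representation of $\Gamma=D_4\dot+T^2$. Then there exists an $\mathcal E(2)$-equivariant polynomial vector field $\mathcal F$ of degree $p$ on $E_\kappa$ with $\tilde F=\mathcal F|_{E^c}$ if and only if for every $\theta\in\mathbb R$, $R_\theta\tilde F(\Phi)=\tilde F(R_\theta\Phi)$ for all $\Phi\in E^c$ with $R_\theta\Phi\in E^c$.
   Context: Integers $l_1>l_2>n_2>0$ with $\kappa^2=l_1^2=l_2^2+n_2^2$; $A(\kappa)=\{k:|k|=\kappa\}$, $E_\kappa$ = space of $a:A(\kappa)\to\mathbb C$ with $\sum|a(k)|<\infty$. Wave vectors $q_1=(l_1,0)$, $q_2=(0,l_1)$, $p_1=(l_2,n_2)$, $p_2=(l_2,-n_2)$, $p_3=(n_2,l_2)$, $p_4=(n_2,-l_2)$, $\tilde A=\{\pm q_i,\pm p_j\}$; $E^c\subset E_\kappa$ is the real space of $a$ supported in $\tilde A$ with $a(-k)=\overline{a(k)}$, identified with $\mathbb C^6$ via $z_i=a(q_i)$, $w_j=a(p_j)$. $\mathcal E(2)$ acts by $(\gamma a)(k)=a(\gamma^{-1}k)$ ($\gamma\in O(2)$) and $(T_{s,t}a)(k)=e^{-i(sk_x+tk_y)}a(k)$; $R_\theta$ is counterclockwise rotation; $\Gamma$ is generated by $\gamma_1(x,y)=(-x,y)$, $\gamma_2(x,y)=(y,x)$ and $T_{s,t}$ with $(s,t)\in(\mathbb R/2\pi\mathbb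 Z)^2$, which preserve $E^c$. An $\mathcal E(2)$-equivariant polynomial vector field of degree $p$ on $E_\kappa$ is a map on finitely supported $a$ of the form $\mathcal F(a)(k)=\sum_{k_1,\dots,k_p\in A(\kappa)}P(k,k_1,\dots,k_p)a(k_1)\cdots a(k_p)$ (finitely many nonzero terms) commuting with all of $\mathcal E(2)$. *)

theory Defs
  imports "HOL-Analysis.Analysis"
begin

(* Wave vectors live in the plane R^2 = real^2; a field a : A(kappa) -> C is
   represented as a function real^2 => complex vanishing off A(kappa). *)
type_synonym field = "real^2 \<Rightarrow> complex"

definition circ :: "real \<Rightarrow> (real^2) set" where
  "circ \<kappa> = {k. norm k = \<kappa>}"

definition supp :: "field \<Rightarrow> (real^2) set" where
  "supp a = {k. a k \<noteq> 0}"

definition finsupp :: "real \<Rightarrow> field \<Rightarrow> bool" where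
  "finsupp \<kappa> a \<longleftrightarrow> finite (supp a) \<and> supp a \<subseteq> circ \<kappa>"

definition act :: "(real^2 \<Rightarrow> real^2) \<Rightarrow> field \<Rightarrow> field" where
  "act g a = (\<lambda>k. a (inv g k))"

definition transl :: "real \<Rightarrow> real \<Rightarrow> field \<Rightarrow> field" where
  "transl s t a = (\<lambda>k. exp (- \<i> * complex_of_real (s * k$1 + t * k$2)) * a k)"

definition rot :: "real \<Rightarrow> real^2 \<Rightarrow> real^2" where
  "rot \<theta> k = vector [cos \<theta> * k$1 - sin \<theta> * k$2, sin \<theta> * k$1 + cos \<theta> * k$2]"

definition gamma1 :: "real^2 \<Rightarrow> real^2" where
  "gamma1 k = vector [- k$1, k$2]"

definition gamma2 :: "real^2 \<Rightarrow> real^2" where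
  "gamma2 k = vector [k$2, k$1]"

(* polynomial vector field of degree p on E_kappa (defined on finitely supported a):
   F(a)(k) = sum_{k_1..k_p in A(kappa)} P(k,k_1,..,k_p) a(k_1)...a(k_p);
   for finitely supported a only tuples in supp a contribute. *)
definition poly_vf :: "real \<Rightarrow> nat \<Rightarrow> (field \<Rightarrow> field) \<Rightarrow> bool" where
  "poly_vf \<kappa> p F \<longleftrightarrow> (\<exists>P :: real^2 \<Rightarrow> (real^2) list \<Rightarrow> complex.
     \<forall>a. finsupp \<kappa> a \<longrightarrow>
       F a = (\<lambda>k. if k \<in> circ \<kappa> then
                  (\<Sum>ks\<in>{ks. length ks = p \<and> set ks \<subseteq> supp a}. P k ks * prod_list (map a ks))
                else 0))"

definition E2_equivariant :: "real \<Rightarrow> (field \<Rightarrow> field) \<Rightarrow> bool" where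
  "E2_equivariant \<kappa> F \<longleftrightarrow> (\<forall>a. finsupp \<kappa> a \<longrightarrow>
      (\<forall>g. orthogonal_transformation g \<longrightarrow> F (act g a) = act g (F a)) \<and>
      (\<forall>s t. F (transl s t a) = transl s t (F a)))"

(* the six wave vectors q1 q2 p1 p2 p3 p4 *)
definition wvec :: "int \<Rightarrow> int \<Rightarrow> int \<Rightarrow> 6 \<Rightarrow> real^2" where
  "wvec l1 l2 n2 i =
     (if i = 1 then vector [real_of_int l1, 0]
      else if i = 2 then vector [0, real_of_int l1]
      else if i = 3 then vector [real_of_int l2, real_of_int n2]
      else if i = 4 then vector [real_of_int l2, - real_of_int n2]
      else if i = 5 then vector [real_of_int n2, real_of_int l2]
      else vector [real_of_int n2, - real_of_int l2])"

definition Ec :: "int \<Rightarrow> int \<Rightarrow> int \<Rightarrow> field set" where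
  "Ec l1 l2 n2 = {a. (\<forall>k. a k \<noteq> 0 \<longrightarrow> k \<in> range (wvec l1 l2 n2) \<union> uminus ` range (wvec l1 l2 n2))
                   \<and> (\<forall>k. a (- k) = cnj (a k))}"

(* identification E^c = C^6 : z_i = a(q_i), w_j = a(p_j) *)
definition coords :: "int \<Rightarrow> int \<Rightarrow> int \<Rightarrow> field \<Rightarrow> complex^6" where
  "coords l1 l2 n2 a = (\<chi> i. a (wvec l1 l2 n2 i))"

definition embed :: "int \<Rightarrow> int \<Rightarrow> int \<Rightarrow> complex^6 \<Rightarrow> field" where
  "embed l1 l2 n2 x = (\<lambda>k. \<Sum>i\<in>UNIV.
      (if k = wvec l1 l2 n2 i then x$i else 0) + (if k = - wvec l1 l2 n2 i then cnj (x$i) else 0))"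

(* homogeneous polynomial map of degree p on C^n (as a real space): polynomial in z, conj z *)
definition hom_poly_map :: "nat \<Rightarrow> (complex^'n \<Rightarrow> complex^'n) \<Rightarrow> bool" where
  "hom_poly_map p G \<longleftrightarrow> (\<exists>c :: ('n \<Rightarrow> nat) \<Rightarrow> ('n \<Rightarrow> nat) \<Rightarrow> complex^'n.
     \<forall>x. G x = (\<Sum>(\<alpha>,\<beta>)\<in>{(\<alpha>,\<beta>). (\<Sum>i\<in>UNIV. \<alpha> i) + (\<Sum>i\<in>UNIV. \<beta> i) = p}.
                   (\<Prod>i\<in>UNIV. x$i ^ \<alpha> i * cnj (x$i) ^ \<beta> i) *s c \<alpha> \<beta>))"

(* equivariance w.r.t. the [4,8] representation of Gamma = D4 +. T^2 on C^6 = E^c,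
   i.e. commuting with the generators gamma1, gamma2, T_{s,t} *)
definition Gamma_equivariant :: "int \<Rightarrow> int \<Rightarrow> int \<Rightarrow> (complex^6 \<Rightarrow> complex^6) \<Rightarrow> bool" where
  "Gamma_equivariant l1 l2 n2 G \<longleftrightarrow>
     (\<forall>x. (\<forall>g\<in>{gamma1, gamma2}.
              G (coords l1 l2 n2 (act g (embed l1 l2 n2 x))) = coords l1 l2 n2 (act g (embed l1 l2 n2 (G x))))
          \<and> (\<forall>s t. G (coords l1 l2 n2 (transl s t (embed l1 l2 n2 x)))
                     = coords l1 l2 n2 (transl s t (embed l1 l2 n2 (G x)))))"

end

theory Submission
  imports Defs "HOL-Computational_Algebra.Polynomial" "HOL-Library.Multiset"
begin

lemma infinite_unit_circle: "infinite {\<omega>::complex. norm \<omega> = 1}"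
proof
  assume fin: "finite {\<omega>::complex. norm \<omega> = 1}"
  have "{-1..1::real} \<subseteq> Re ` {\<omega>::complex. norm \<omega> = 1}"
  proof
    fix x :: real assume x: "x \<in> {-1..1}"
    let ?\<omega> = "Complex x (sqrt (1 - x^2))"
    have "x^2 \<le> 1" using x by (auto simp: abs_square_le_1 abs_le_iff)
    then have "1 - x^2 \<ge> 0" by simp
    then have "norm ?\<omega> = 1" by (simp add: cmod_def)
    then show "x \<in> Re ` {\<omega>. norm \<omega> = 1}" by force
  qed
  moreover have "infinite {-1..1::real}" by simp
  ultimately show False using fin finite_subset by blast
qed

lemma poly_zero_on_infinite:
  fixes q :: "complex poly"
  assumes "infinite S" "\<forall>x\<in>S. poly q x = 0"
  shows "q = 0"
proof (rule ccontr)
  assume "q \<noteq> 0"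
  then have "finite {x. poly q x = 0}" by (rule poly_roots_finite)
  moreover have "S \<subseteq> {x. poly q x = 0}" using assms by auto
  ultimately show False using assms(1) finite_subset by blast
qed

lemma zzbar_unique:
  fixes c :: "nat \<times> nat \<Rightarrow> complex"
  assumes fin: "finite D"
    and z: "\<And>z. (\<Sum>(a,b)\<in>D. c (a,b) * z^a * cnj z ^ b) = 0"
  shows "\<forall>(a,b)\<in>D. c (a,b) = 0"
proof -
  define K where "K = Max ((\<lambda>(a,b). a + b) ` D)"
  have K: "a + b \<le> K" if "(a,b) \<in> D" for a b
    unfolding K_def using fin that by (intro Max_ge) force+
  have stepA: "(\<Sum>(a,b)\<in>{(a,b)\<in>D. a + b = n}. c (a,b) * \<omega>^a * cnj \<omega> ^ b) = 0"
    if \<omega>: "norm \<omega> = 1" for \<omega> n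
  proof -
    define g where "g n = (\<Sum>(a,b)\<in>{(a,b)\<in>D. a + b = n}. c (a,b) * \<omega>^a * cnj \<omega> ^ b)" for n
    define q where "q = (\<Sum>n\<le>K. monom (g n) n)"
    have "poly q (complex_of_real t) = 0" for t
    proof -
      have "poly q (complex_of_real t) = (\<Sum>n\<le>K. g n * (complex_of_real t)^n)"
        by (simp add: q_def poly_sum poly_monom)
      also have "\<dots> = (\<Sum>n\<le>K. (\<Sum>(a,b)\<in>{(a,b)\<in>D. a + b = n}. c (a,b) * (complex_of_real t * \<omega>)^a * cnj (complex_of_real t * \<omega>) ^ b))"
      proof (rule sum.cong[OF refl])
        fix n assume "n \<in> {..K}"
        have "g n * (complex_of_real t)^n = (\<Sum>(a,b)\<in>{(a,b)\<in>D. a + b = n}. c (a,b) * \<omega>^a * cnj \<omega> ^ b * (complex_of_real t)^n)"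
          by (simp add: g_def sum_distrib_right case_prod_unfold)
        also have "\<dots> = (\<Sum>(a,b)\<in>{(a,b)\<in>D. a + b = n}. c (a,b) * (complex_of_real t * \<omega>)^a * cnj (complex_of_real t * \<omega>) ^ b)"
          by (rule sum.cong[OF refl]) (auto simp: power_mult_distrib power_add)
        finally show "g n * (complex_of_real t)^n = \<dots>" .
      qed
      also have "\<dots> = (\<Sum>(a,b)\<in>D. c (a,b) * (complex_of_real t * \<omega>)^a * cnj (complex_of_real t * \<omega>) ^ b)"
        using sum.group[OF fin finite_atMost, of "\<lambda>(a,b). a + b" K "\<lambda>(a,b). c (a,b) * (complex_of_real t * \<omega>)^a * cnj (complex_of_real t * \<omega>) ^ b"]
          K by (force simp: case_prod_unfold)
      also have "\<dots> = 0" by (rule z)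
      finally show ?thesis .
    qed
    moreover have "infinite (range complex_of_real)"
      by (metis finite_imageD infinite_UNIV_char_0 inj_of_real)
    ultimately have "q = 0"
      by (intro poly_zero_on_infinite[of "range complex_of_real"]) auto
    show ?thesis
    proof (cases "n \<le> K")
      case True
      have "coeff q n = g n" unfolding q_def using True
        by (simp add: coeff_sum coeff_monom)
      then show ?thesis using \<open>q = 0\<close> by (simp add: g_def)
    next
      case False
      then have e: "{(a,b)\<in>D. a + b = n} = {}" using K by force
      show ?thesis by (subst e) simp
    qed
  qed
  show ?thesis
  proof (clarify)
    fix a0 b0 assume ab0: "(a0, b0) \<in> D"
    define n where "n = a0 + b0"
    define Dn where "Dn = {(a,b)\<in>D. a + b = n}"
    have finDn: "finite Dn" by (rule finite_subset[OF _ fin]) (auto simp: Dn_def)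
    define r where "r = (\<Sum>(a,b)\<in>Dn. monom (c (a,b)) (2*a))"
    have "poly r \<omega> = 0" if \<omega>: "norm \<omega> = 1" for \<omega>
    proof -
      have "poly r \<omega> = (\<Sum>(a,b)\<in>Dn. c (a,b) * \<omega>^(2*a))"
        by (simp add: r_def poly_sum poly_monom case_prod_unfold)
      also have "\<dots> = (\<Sum>(a,b)\<in>Dn. \<omega>^n * (c (a,b) * \<omega>^a * cnj \<omega> ^ b))"
      proof (rule sum.cong[OF refl], clarify)
        fix a b assume "(a,b) \<in> Dn"
        then have nab: "n = a + b" by (simp add: Dn_def)
        have "\<omega> * cnj \<omega> = 1" using \<omega>
          by (metis complex_norm_square mult.commute of_real_1 power_one)
        then have "\<omega>^b * cnj \<omega>^b = 1" by (metis power_mult_distrib power_one)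
        have sq: "\<omega>^(2*a) = \<omega>^a * \<omega>^a" by (simp only: mult_2 power_add)
        have "\<omega>^n * (\<omega>^a * cnj \<omega> ^ b) = \<omega>^(2*a) * (\<omega>^b * cnj \<omega>^b)"
          unfolding sq nab power_add by (simp only: mult_ac)
        then show "c (a,b) * \<omega>^(2*a) = \<omega>^n * (c (a,b) * \<omega>^a * cnj \<omega> ^ b)"
          using \<open>\<omega>^b * cnj \<omega>^b = 1\<close> by (simp add: algebra_simps)
      qed
      also have "\<dots> = \<omega>^n * (\<Sum>(a,b)\<in>Dn. c (a,b) * \<omega>^a * cnj \<omega> ^ b)"
        by (simp add: sum_distrib_left case_prod_unfold)
      also have "\<dots> = 0" using stepA[OF \<omega>, of n] by (simp add: Dn_def)
      finally show ?thesis .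
    qed
    then have "r = 0" using infinite_unit_circle
      by (intro poly_zero_on_infinite[of "{\<omega>. norm \<omega> = 1}"]) auto
    have "coeff r (2*a0) = (\<Sum>(a,b)\<in>Dn. if 2*a0 = 2*a then c (a,b) else 0)"
      by (auto simp: r_def coeff_sum coeff_monom case_prod_unfold intro!: sum.cong)
    also have "\<dots> = (\<Sum>(a,b)\<in>{(a0,b0)}. if 2*a0 = 2*a then c (a,b) else 0)"
    proof (rule sum.mono_neutral_right[OF finDn])
      show "{(a0, b0)} \<subseteq> Dn" using ab0 by (simp add: Dn_def n_def)
      show "\<forall>i\<in>Dn - {(a0, b0)}. (case i of (a, b) \<Rightarrow> if 2 * a0 = 2 * a then c (a, b) else 0) = 0"
        by (auto simp: Dn_def n_def split: if_splits)
    qed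
    also have "\<dots> = c (a0,b0)" by simp
    finally show "c (a0, b0) = 0" using \<open>r = 0\<close> by simp
  qed
qed

lemma digits_bound:
  fixes N :: nat
  assumes "\<forall>j<n. d j < N"
  shows "(\<Sum>j<n. d j * N^j) < N^n"
  using assms
proof (induction n)
  case 0 then show ?case by simp
next
  case (Suc n)
  then have IH: "(\<Sum>j<n. d j * N^j) < N^n" by simp
  have "d n < N" using Suc.prems by simp
  then have "d n * N^n \<le> (N - 1) * N^n" by (intro mult_right_mono) auto
  moreover have "(\<Sum>j<Suc n. d j * N^j) = (\<Sum>j<n. d j * N^j) + d n * N^n" by simp
  ultimately have "(\<Sum>j<Suc n. d j * N^j) < N^n + (N - 1) * N^n" using IH by linarith
  also have "\<dots> = N * N^n" using \<open>d n < N\<close> by (cases N) auto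
  finally show ?case by simp
qed

lemma digits_unique:
  fixes N :: nat
  assumes "\<forall>j<n. d j < N" "\<forall>j<n. e j < N" "(\<Sum>j<n. d j * N^j) = (\<Sum>j<n. e j * N^j)"
  shows "\<forall>j<n. d j = e j"
  using assms
proof (induction n)
  case 0 then show ?case by simp
next
  case (Suc n)
  have bd: "(\<Sum>j<n. d j * N^j) < N^n" and be: "(\<Sum>j<n. e j * N^j) < N^n"
    using Suc.prems by (auto intro!: digits_bound)
  have eq: "(\<Sum>j<n. d j * N^j) + d n * N^n = (\<Sum>j<n. e j * N^j) + e n * N^n"
    using Suc.prems(3) by simp
  have "N > 0" using Suc.prems(1) by (metis gr_zeroI lessI not_less_zero)
  then have Np: "N^n \<noteq> 0" by simp
  have "((\<Sum>j<n. d j * N^j) + d n * N^n) div N^n = d n + (\<Sum>j<n. d j * N^j) div N^n"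
    by (rule div_mult_self1[OF Np])
  then have "((\<Sum>j<n. d j * N^j) + d n * N^n) div N^n = d n"
    using div_less[OF bd] by simp
  moreover have "((\<Sum>j<n. e j * N^j) + e n * N^n) div N^n = e n + (\<Sum>j<n. e j * N^j) div N^n"
    by (rule div_mult_self1[OF Np])
  then have "((\<Sum>j<n. e j * N^j) + e n * N^n) div N^n = e n"
    using div_less[OF be] by simp
  ultimately have dn: "d n = e n" using eq by simp
  then have "(\<Sum>j<n. d j * N^j) = (\<Sum>j<n. e j * N^j)" using eq by simp
  have p1: "\<forall>j<n. d j < N" using Suc.prems(1) less_SucI by blast
  have p2: "\<forall>j<n. e j < N" using Suc.prems(2) less_SucI by blast
  have IHr: "\<forall>j<n. d j = e j" by (rule Suc.IH[OF p1 p2]) fact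
  show ?case
  proof (intro allI impI)
    fix j assume "j < Suc n"
    then consider "j < n" | "j = n" by linarith
    then show "d j = e j" using IHr dn by cases auto
  qed
qed

lemma enc_inj:
  fixes f :: "'n::finite \<Rightarrow> nat"
  assumes fm: "f ` UNIV = {i. i < m}" "inj f"
    and a: "\<forall>i. \<alpha> i \<le> p" and b: "\<forall>i. \<alpha>' i \<le> p"
    and eq: "(\<Sum>i\<in>UNIV. \<alpha> i * Suc p ^ f i) = (\<Sum>i\<in>UNIV. \<alpha>' i * Suc p ^ f i)"
  shows "\<alpha> = \<alpha>'"
proof -
  define g where "g = inv f"
  have gf: "g (f i) = i" for i using fm(2) by (simp add: g_def)
  have re: "(\<Sum>i\<in>UNIV. h i * Suc p ^ f i) = (\<Sum>j<m. h (g j) * Suc p ^ j)" for h :: "'n \<Rightarrow> nat"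
  proof -
    have "(\<Sum>j<m. h (g j) * Suc p ^ j) = (\<Sum>j\<in>f ` UNIV. h (g j) * Suc p ^ j)"
      using fm(1) by (simp add: lessThan_def)
    also have "\<dots> = (\<Sum>i\<in>UNIV. h (g (f i)) * Suc p ^ f i)"
      using fm(2) by (simp add: sum.reindex)
    finally show ?thesis by (simp add: gf)
  qed
  have "\<forall>j<m. \<alpha> (g j) = \<alpha>' (g j)"
    by (rule digits_unique[where N = "Suc p"]) (use a b eq re in \<open>auto simp: le_imp_less_Suc\<close>)
  moreover have "f i < m" for i using fm(1) by auto
  ultimately show ?thesis by (metis gf ext)
qed

lemma multi_unique:
  fixes c :: "('n::finite \<Rightarrow> nat) \<times> ('n \<Rightarrow> nat) \<Rightarrow> complex"
  assumes fin: "finite D" and bd: "\<forall>(\<alpha>,\<beta>)\<in>D. \<forall>i. \<alpha> i \<le> p \<and> \<beta> i \<le> p"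
    and z: "\<And>x::'n \<Rightarrow> complex. (\<Sum>(\<alpha>,\<beta>)\<in>D. c (\<alpha>,\<beta>) * (\<Prod>i\<in>UNIV. x i ^ \<alpha> i * cnj (x i) ^ \<beta> i)) = 0"
  shows "\<forall>(\<alpha>,\<beta>)\<in>D. c (\<alpha>,\<beta>) = 0"
proof -
  obtain f :: "'n \<Rightarrow> nat" and m where fm: "f ` UNIV = {i. i < m}" "inj_on f UNIV"
    using finite_imp_inj_to_nat_seg[of "UNIV::'n set"] by auto
  define enc where "enc \<alpha> = (\<Sum>i\<in>UNIV. \<alpha> i * Suc p ^ f i)" for \<alpha> :: "'n \<Rightarrow> nat"
  define \<kappa> where "\<kappa> = (\<lambda>(\<alpha>,\<beta>). (enc \<alpha>, enc \<beta>))"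
  have inj\<kappa>: "inj_on \<kappa> D"
  proof (rule inj_onI, clarify)
    fix \<alpha> \<beta> \<alpha>' \<beta>' assume "(\<alpha>,\<beta>) \<in> D" "(\<alpha>',\<beta>') \<in> D" "\<kappa> (\<alpha>,\<beta>) = \<kappa> (\<alpha>',\<beta>')"
    then show "\<alpha> = \<alpha>' \<and> \<beta> = \<beta>'"
      using bd fm unfolding \<kappa>_def enc_def
      by (auto intro!: enc_inj[of f m _ p])
  qed
  define c' where "c' = c \<circ> the_inv_into D \<kappa>"
  have mono: "(\<Prod>i\<in>UNIV. (z ^ (Suc p ^ f i)) ^ \<alpha> i * cnj (z ^ (Suc p ^ f i)) ^ \<beta> i) = z ^ enc \<alpha> * cnj z ^ enc \<beta>"
    for z :: complex and \<alpha> \<beta>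
    by (simp add: enc_def prod.distrib power_sum complex_cnj_power power_mult[symmetric] mult.commute)
  have c'k: "c' (\<kappa> ab) = c ab" if "ab \<in> D" for ab
    using that inj\<kappa> by (simp add: c'_def the_inv_into_f_f)
  have "(\<Sum>(a,b)\<in>\<kappa> ` D. c' (a,b) * z^a * cnj z ^ b) = 0" for z :: complex
  proof -
    have "(\<Sum>(a,b)\<in>\<kappa> ` D. c' (a,b) * z^a * cnj z ^ b) = (\<Sum>ab\<in>D. (\<lambda>(a,b). c' (a,b) * z^a * cnj z ^ b) (\<kappa> ab))"
      by (rule sum.reindex[OF inj\<kappa>, unfolded comp_def])
    also have "\<dots> = (\<Sum>(\<alpha>,\<beta>)\<in>D. c (\<alpha>,\<beta>) * (\<Prod>i\<in>UNIV. (z ^ (Suc p ^ f i)) ^ \<alpha> i * cnj (z ^ (Suc p ^ f i)) ^ \<beta> i))"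
    proof (rule sum.cong[OF refl], clarify)
      fix \<alpha> \<beta> assume "(\<alpha>,\<beta>) \<in> D"
      then have "c' (enc \<alpha>, enc \<beta>) = c (\<alpha>,\<beta>)" using c'k[of "(\<alpha>,\<beta>)"] by (simp add: \<kappa>_def)
      then show "(\<lambda>(a,b). c' (a,b) * z^a * cnj z ^ b) (\<kappa> (\<alpha>,\<beta>)) = c (\<alpha>,\<beta>) * (\<Prod>i\<in>UNIV. (z ^ (Suc p ^ f i)) ^ \<alpha> i * cnj (z ^ (Suc p ^ f i)) ^ \<beta> i)"
        unfolding mono by (simp add: \<kappa>_def)
    qed
    also have "\<dots> = 0" by (rule z)
    finally show ?thesis .
  qed
  then have "\<forall>(a,b)\<in>\<kappa> ` D. c' (a,b) = 0"
    by (intro zzbar_unique) (use fin in auto)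
  then show ?thesis using c'k by (force simp: \<kappa>_def)
qed

lemma exhaust_6:
  fixes x :: 6
  shows "x = 0 \<or> x = 1 \<or> x = 2 \<or> x = 3 \<or> x = 4 \<or> x = 5"
proof (induct x)
  case (of_int z)
  then have "z = 0 \<or> z = 1 \<or> z = 2 \<or> z = 3 \<or> z = 4 \<or> z = 5" by fastforce
  then show ?case by auto
qed

lemma UNIV_6: "(UNIV :: 6 set) = {0,1,2,3,4,5}"
  using exhaust_6 by auto

lemma vec2_eq_iff: "(x::real^2) = y \<longleftrightarrow> x$1 = y$1 \<and> x$2 = y$2"
  by (metis exhaust_2 vec_eq_iff)

lemma norm_vec2: "norm (x::real^2) = sqrt (x$1^2 + x$2^2)"
  by (simp add: norm_eq_sqrt_inner inner_vec_def sum_2 power2_eq_square)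

locale wsetup =
  fixes l1 l2 n2 :: int
  assumes l12: "l1 > l2" and l2n: "l2 > n2" and n2p: "n2 > 0" and pyth: "l1^2 = l2^2 + n2^2"
begin

abbreviation "w \<equiv> wvec l1 l2 n2"
definition "W = range w \<union> uminus ` range w"

lemma w_simps:
  "w 0 = vector [real_of_int n2, - real_of_int l2]"
  "w 1 = vector [real_of_int l1, 0]"
  "w 2 = vector [0, real_of_int l1]"
  "w 3 = vector [real_of_int l2, real_of_int n2]"
  "w 4 = vector [real_of_int l2, - real_of_int n2]"
  "w 5 = vector [real_of_int n2, real_of_int l2]"
  by (simp_all add: wvec_def)

lemma w_cases: "\<exists>i. w i = vector [real_of_int n2, - real_of_int l2] \<or> True" by auto

lemma inj_w: "inj w"
proof (rule injI)
  fix i j assume "w i = w j"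
  then show "i = j"
    using exhaust_6[of i] exhaust_6[of j] l12 l2n n2p
    by (auto simp: w_simps vec2_eq_iff)
qed

lemma w_neq_neg: "w i \<noteq> - w j"
  using exhaust_6[of i] exhaust_6[of j] l12 l2n n2p
  by (auto simp: w_simps vec2_eq_iff)

lemma norm_w: "norm (w i) = real_of_int l1"
proof -
  have p: "(real_of_int l1)^2 = (real_of_int l2)^2 + (real_of_int n2)^2"
    using pyth by (metis of_int_add of_int_power)
  have l1p: "l1 > 0" using l12 l2n n2p by simp
  have "sqrt ((real_of_int l1)^2) = real_of_int l1" using l1p by simp
  then show ?thesis
    using exhaust_6[of i] p
    by (auto simp: w_simps norm_vec2 add.commute)
qed

lemma finite_W: "finite W" by (simp add: W_def)

lemma W_circ: "W \<subseteq> circ (real_of_int l1)"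
  by (auto simp: W_def circ_def norm_w)

lemma W_neg: "x \<in> W \<Longrightarrow> - x \<in> W"
  by (auto simp: W_def)

lemma w_eq_iff[simp]: "w i = w j \<longleftrightarrow> i = j"
  using inj_w by (auto dest: injD)

lemma w_neg_simps[simp]: "w i \<noteq> - w j" "- w i \<noteq> w j" "- w i = - w j \<longleftrightarrow> i = j"
  using w_neq_neg[of i j] w_neq_neg[of j i] by auto

abbreviation "E \<equiv> embed l1 l2 n2"
abbreviation "C \<equiv> coords l1 l2 n2"
abbreviation "Ecs \<equiv> Ec l1 l2 n2"

lemma embed_w[simp]: "E x (w j) = x$j"
  by (simp add: embed_def eq_commute[of "w j"])

lemma embed_negw[simp]: "E x (- w j) = cnj (x$j)"
  by (simp add: embed_def)

lemma embed_out: "k \<notin> W \<Longrightarrow> E x k = 0"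
  by (auto simp: embed_def W_def intro!: sum.neutral)

lemma W_cases: "k \<in> W \<Longrightarrow> (\<And>j. k = w j \<Longrightarrow> P) \<Longrightarrow> (\<And>j. k = - w j \<Longrightarrow> P) \<Longrightarrow> P"
  by (auto simp: W_def)

lemma embed_Ec: "E x \<in> Ecs"
proof -
  have "E x (- k) = cnj (E x k)" for k
  proof (cases "k \<in> W")
    case True
    then show ?thesis by (rule W_cases) auto
  next
    case False
    then have "- k \<notin> W" using W_neg by force
    then show ?thesis using False by (simp add: embed_out)
  qed
  moreover have "E x k \<noteq> 0 \<Longrightarrow> k \<in> range w \<union> uminus ` range w" for k
    using embed_out[of k x] by (auto simp: W_def)
  ultimately show ?thesis by (simp add: Ec_def)
qed

lemma coords_embed[simp]: "C (E x) = x"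
  by (simp add: coords_def vec_eq_iff)

lemma Ec_cnj: "\<Phi> \<in> Ecs \<Longrightarrow> \<Phi> (- k) = cnj (\<Phi> k)"
  by (simp add: Ec_def)

lemma Ec_out: "\<Phi> \<in> Ecs \<Longrightarrow> k \<notin> W \<Longrightarrow> \<Phi> k = 0"
  by (auto simp: Ec_def W_def)

lemma Ec_supp: "\<Phi> \<in> Ecs \<Longrightarrow> supp \<Phi> \<subseteq> W"
  using Ec_out by (auto simp: supp_def)

lemma embed_coords: "\<Phi> \<in> Ecs \<Longrightarrow> E (C \<Phi>) = \<Phi>"
proof
  fix k assume \<Phi>: "\<Phi> \<in> Ecs"
  show "E (C \<Phi>) k = \<Phi> k"
  proof (cases "k \<in> W")
    case True
    then show ?thesis by (rule W_cases) (auto simp: coords_def Ec_cnj[OF \<Phi>])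
  next
    case False
    then show ?thesis by (simp add: embed_out Ec_out[OF \<Phi>])
  qed
qed

lemma Ec_finsupp: "\<Phi> \<in> Ecs \<Longrightarrow> finsupp (real_of_int l1) \<Phi>"
  using Ec_supp W_circ finite_W by (meson finite_subset finsupp_def order_trans)

end

definition monoM :: "field \<Rightarrow> (real^2) multiset \<Rightarrow> complex" where
  "monoM \<Phi> M = prod_mset (image_mset \<Phi> M)"

definition negM :: "(real^2) multiset \<Rightarrow> (real^2) multiset" where
  "negM M = image_mset uminus M"

lemma negM_negM[simp]: "negM (negM M) = M"
  by (simp add: negM_def multiset.map_comp comp_def)

lemma cnj_prod_mset: "cnj (prod_mset (image_mset f M)) = prod_mset (image_mset (\<lambda>x. cnj (f x)) M)"
  by (induction M) auto

lemma monoM_zero: "x \<in># M \<Longrightarrow> \<Phi> x = 0 \<Longrightarrow> monoM \<Phi> M = 0"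
  by (simp add: monoM_def prod_mset_zero_iff)

lemma monoM_nonsupp: "\<not> set_mset M \<subseteq> supp \<Phi> \<Longrightarrow> monoM \<Phi> M = 0"
  using monoM_zero by (auto simp: supp_def)

context wsetup begin

definition "Ms p = {M. set_mset M \<subseteq> W \<and> size M = p}"
definition "Mab \<alpha> \<beta> = (\<Sum>i\<in>UNIV. replicate_mset (\<alpha> i) (w i) + replicate_mset (\<beta> i) (- w i))"
definition "cp M i = count M (w i)"
definition "cm M i = count M (- w i)"
definition "Dp p = {(\<alpha>::6\<Rightarrow>nat,\<beta>::6\<Rightarrow>nat). (\<Sum>i\<in>UNIV. \<alpha> i) + (\<Sum>i\<in>UNIV. \<beta> i) = (p::nat)}"

lemma finite_Ms: "finite (Ms p)"
proof -
  have "Ms p \<subseteq> mset ` {xs. set xs \<subseteq> W \<and> length xs = p}"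
  proof
    fix M assume "M \<in> Ms p"
    obtain xs where xs: "mset xs = M" using ex_mset by blast
    have "set xs \<subseteq> W \<and> length xs = p" using \<open>M \<in> Ms p\<close> xs by (auto simp: Ms_def)
    then show "M \<in> mset ` {xs. set xs \<subseteq> W \<and> length xs = p}" using xs by blast
  qed
  then show ?thesis using finite_W by (rule finite_subset[OF _ finite_imageI[OF finite_lists_length_eq]])
qed

lemma count_Mab_w[simp]: "count (Mab \<alpha> \<beta>) (w j) = \<alpha> j"
  by (simp add: Mab_def count_sum)

lemma count_Mab_negw[simp]: "count (Mab \<alpha> \<beta>) (- w j) = \<beta> j"
  by (simp add: Mab_def count_sum)

lemma count_Mab_out: "k \<notin> W \<Longrightarrow> count (Mab \<alpha> \<beta>) k = 0"
  by (auto simp: Mab_def count_sum W_def)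

lemma cp_Mab[simp]: "cp (Mab \<alpha> \<beta>) = \<alpha>"
  by (rule ext) (simp add: cp_def)

lemma cm_Mab[simp]: "cm (Mab \<alpha> \<beta>) = \<beta>"
  by (rule ext) (simp add: cm_def)

lemma set_Mab: "set_mset (Mab \<alpha> \<beta>) \<subseteq> W"
  using count_Mab_out by (metis count_eq_zero_iff subsetI)

lemma size_Mab: "size (Mab \<alpha> \<beta>) = (\<Sum>i\<in>UNIV. \<alpha> i) + (\<Sum>i\<in>UNIV. \<beta> i)"
  by (simp add: Mab_def size_multiset_sum sum.distrib)

lemma Mab_cp_cm: "set_mset M \<subseteq> W \<Longrightarrow> Mab (cp M) (cm M) = M"
proof (rule multiset_eqI)
  fix k assume sub: "set_mset M \<subseteq> W"
  show "count (Mab (cp M) (cm M)) k = count M k"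
  proof (cases "k \<in> W")
    case True
    then show ?thesis by (rule W_cases) (auto simp: cp_def cm_def)
  next
    case False
    then show ?thesis using sub count_Mab_out by (metis count_eq_zero_iff subsetD)
  qed
qed

lemma bij_Mab: "bij_betw (\<lambda>(\<alpha>,\<beta>). Mab \<alpha> \<beta>) (Dp p) (Ms p)"
proof (rule bij_betw_byWitness[where f' = "\<lambda>M. (cp M, cm M)"])
  show "\<forall>a\<in>Dp p. (\<lambda>M. (cp M, cm M)) ((\<lambda>(\<alpha>,\<beta>). Mab \<alpha> \<beta>) a) = a"
    by (auto simp: cp_def cm_def fun_eq_iff)
  show "\<forall>a'\<in>Ms p. (\<lambda>(\<alpha>,\<beta>). Mab \<alpha> \<beta>) ((\<lambda>M. (cp M, cm M)) a') = a'"
    by (auto simp: Ms_def Mab_cp_cm)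
  show "(\<lambda>(\<alpha>,\<beta>). Mab \<alpha> \<beta>) ` Dp p \<subseteq> Ms p"
    by (auto simp: Ms_def Dp_def size_Mab intro: set_Mab[THEN subsetD])
  show "(\<lambda>M. (cp M, cm M)) ` Ms p \<subseteq> Dp p"
  proof clarify
    fix M assume "M \<in> Ms p"
    then have "size (Mab (cp M) (cm M)) = p" "set_mset M \<subseteq> W" by (auto simp: Ms_def Mab_cp_cm)
    then show "(cp M, cm M) \<in> Dp p" by (simp add: Dp_def size_Mab)
  qed
qed

lemma finite_Dp: "finite (Dp p)"
  by (simp add: bij_betw_finite[OF bij_Mab[of p]] finite_Ms)

lemma prod_W: "(\<Prod>k\<in>W. g k) = (\<Prod>i\<in>UNIV. g (w i) * g (- w i))"
proof -
  have d: "range w \<inter> uminus ` range w = {}" by auto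
  have "(\<Prod>k\<in>W. g k) = (\<Prod>k\<in>range w. g k) * (\<Prod>k\<in>uminus ` range w. g k)"
    unfolding W_def by (rule prod.union_disjoint) (use d in auto)
  also have "(\<Prod>k\<in>range w. g k) = (\<Prod>i\<in>UNIV. g (w i))"
    using inj_w by (simp add: prod.reindex)
  also have "(\<Prod>k\<in>uminus ` range w. g k) = (\<Prod>i\<in>UNIV. g (- w i))"
  proof -
    have "inj_on (\<lambda>i. - w i) UNIV" by (auto intro: inj_onI)
    then have "(\<Prod>k\<in>(\<lambda>i. - w i) ` UNIV. g k) = (\<Prod>i\<in>UNIV. g (- w i))"
      by (simp add: prod.reindex)
    moreover have "uminus ` range w = (\<lambda>i. - w i) ` UNIV" by auto
    ultimately show ?thesis by simp
  qed
  finally show ?thesis by (simp add: prod.distrib)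
qed

lemma monoM_W: "set_mset M \<subseteq> W \<Longrightarrow> monoM \<Phi> M = (\<Prod>k\<in>W. \<Phi> k ^ count M k)"
  unfolding monoM_def image_prod_mset_multiplicity
  by (rule prod.mono_neutral_left) (auto simp: finite_W not_in_iff)

lemma monoM_Mab: "monoM \<Phi> (Mab \<alpha> \<beta>) = (\<Prod>i\<in>UNIV. \<Phi> (w i) ^ \<alpha> i * \<Phi> (- w i) ^ \<beta> i)"
  by (simp add: monoM_W[OF set_Mab] prod_W)

lemma monoM_cnj: "\<Phi> \<in> Ecs \<Longrightarrow> cnj (monoM \<Phi> M) = monoM \<Phi> (negM M)"
  by (simp add: monoM_def cnj_prod_mset negM_def multiset.map_comp comp_def Ec_cnj)

lemma negM_Ms: "M \<in> Ms p \<Longrightarrow> negM M \<in> Ms p"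
  by (auto simp: Ms_def negM_def W_neg)

end

locale ftsetup = wsetup +
  fixes p :: nat and Ft :: "complex^6 \<Rightarrow> complex^6"
    and c :: "(6 \<Rightarrow> nat) \<Rightarrow> (6 \<Rightarrow> nat) \<Rightarrow> complex^6"
  assumes Ftc: "\<And>x. Ft x = (\<Sum>(\<alpha>,\<beta>)\<in>{(\<alpha>,\<beta>). (\<Sum>i\<in>UNIV. \<alpha> i) + (\<Sum>i\<in>UNIV. \<beta> i) = p}.
                   (\<Prod>i\<in>UNIV. x$i ^ \<alpha> i * cnj (x$i) ^ \<beta> i) *s c \<alpha> \<beta>)"
begin

definition "C0 k M = (if k \<in> range w then c (cp M) (cm M) $ (inv w k)
   else if - k \<in> range w then cnj (c (cp (negM M)) (cm (negM M)) $ (inv w (- k))) else 0)"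

lemma Ft_comp: "\<Phi> \<in> Ecs \<Longrightarrow> Ft (C \<Phi>) $ j = (\<Sum>M\<in>Ms p. monoM \<Phi> M * c (cp M) (cm M) $ j)"
proof -
  assume \<Phi>: "\<Phi> \<in> Ecs"
  have "Ft (C \<Phi>) $ j = (\<Sum>(\<alpha>,\<beta>)\<in>Dp p. (\<Prod>i\<in>UNIV. \<Phi> (w i) ^ \<alpha> i * \<Phi> (- w i) ^ \<beta> i) * c \<alpha> \<beta> $ j)"
    by (simp add: Ftc sum_component case_prod_unfold Dp_def coords_def Ec_cnj[OF \<Phi>])
  also have "\<dots> = (\<Sum>(\<alpha>,\<beta>)\<in>Dp p. monoM \<Phi> (Mab \<alpha> \<beta>) * c (cp (Mab \<alpha> \<beta>)) (cm (Mab \<alpha> \<beta>)) $ j)"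
    by (rule sum.cong[OF refl]) (auto simp: monoM_Mab)
  also have "\<dots> = (\<Sum>M\<in>Ms p. monoM \<Phi> M * c (cp M) (cm M) $ j)"
    using sum.reindex_bij_betw[OF bij_Mab, of "\<lambda>M. monoM \<Phi> M * c (cp M) (cm M) $ j" p]
    by (simp add: case_prod_unfold)
  finally show ?thesis .
qed

lemma rep: "\<Phi> \<in> Ecs \<Longrightarrow> E (Ft (C \<Phi>)) k = (\<Sum>M\<in>Ms p. C0 k M * monoM \<Phi> M)"
proof -
  assume \<Phi>: "\<Phi> \<in> Ecs"
  show ?thesis
  proof (cases "k \<in> W")
    case True
    then show ?thesis
    proof (rule W_cases)
      fix j assume k: "k = w j"
      show ?thesis using Ft_comp[OF \<Phi>, of j] by (simp add: k C0_def mult.commute inv_f_f[OF inj_w])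
    next
      fix j assume k: "k = - w j"
      have nr: "- w j \<notin> range w" by auto
      have "E (Ft (C \<Phi>)) k = cnj (\<Sum>M\<in>Ms p. monoM \<Phi> M * c (cp M) (cm M) $ j)"
        using Ft_comp[OF \<Phi>, of j] by (simp add: k)
      also have "\<dots> = (\<Sum>M\<in>Ms p. monoM \<Phi> (negM M) * cnj (c (cp M) (cm M) $ j))"
        by (simp add: monoM_cnj[OF \<Phi>])
      also have "\<dots> = (\<Sum>M\<in>Ms p. monoM \<Phi> M * cnj (c (cp (negM M)) (cm (negM M)) $ j))"
        by (rule sum.reindex_bij_witness[where i = negM and j = negM]) (auto simp: negM_Ms)
      also have "\<dots> = (\<Sum>M\<in>Ms p. C0 k M * monoM \<Phi> M)"
        by (simp add: k C0_def nr inv_f_f[OF inj_w] mult.commute)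
      finally show ?thesis .
    qed
  next
    case False
    have nr1: "k \<notin> range w" using False by (auto simp: W_def)
    have nr2: "- k \<notin> range w"
    proof
      assume "- k \<in> range w"
      then obtain i where "- k = w i" by auto
      then have "k = - w i" by (metis minus_minus)
      then have "k \<in> W" by (auto simp: W_def)
      with False show False by simp
    qed
    note nr = nr1 nr2
    then have "C0 k M = 0" for M unfolding C0_def by simp
    moreover have "E (Ft (C \<Phi>)) k = 0" by (rule embed_out[OF False])
    ultimately show ?thesis by simp
  qed
qed

end

context wsetup begin

lemma Ec_unique:
  assumes z: "\<And>\<Phi>. \<Phi> \<in> Ecs \<Longrightarrow> (\<Sum>M\<in>Ms p. a M * monoM \<Phi> M) = 0"
    and M: "M \<in> Ms p"
  shows "a M = 0"
proof -
  have bd: "\<forall>(\<alpha>,\<beta>)\<in>Dp p. \<forall>i. \<alpha> i \<le> p \<and> \<beta> i \<le> p"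
  proof (clarify)
    fix \<alpha> \<beta> :: "6 \<Rightarrow> nat" and i assume "(\<alpha>,\<beta>) \<in> Dp p"
    then have s: "(\<Sum>i\<in>UNIV. \<alpha> i) + (\<Sum>i\<in>UNIV. \<beta> i) = p" by (simp add: Dp_def)
    have "\<alpha> i \<le> (\<Sum>i\<in>UNIV. \<alpha> i)" "\<beta> i \<le> (\<Sum>i\<in>UNIV. \<beta> i)"
      by (auto intro!: member_le_sum)
    then show "\<alpha> i \<le> p \<and> \<beta> i \<le> p" using s by linarith
  qed
  have zz: "(\<Sum>(\<alpha>,\<beta>)\<in>Dp p. a (Mab \<alpha> \<beta>) * (\<Prod>i\<in>UNIV. x i ^ \<alpha> i * cnj (x i) ^ \<beta> i)) = 0"
    for x :: "6 \<Rightarrow> complex"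
  proof -
    define xv where "xv = (\<chi> i. x i)"
    have "(\<Sum>(\<alpha>,\<beta>)\<in>Dp p. a (Mab \<alpha> \<beta>) * (\<Prod>i\<in>UNIV. x i ^ \<alpha> i * cnj (x i) ^ \<beta> i))
        = (\<Sum>(\<alpha>,\<beta>)\<in>Dp p. a (Mab \<alpha> \<beta>) * monoM (E xv) (Mab \<alpha> \<beta>))"
      by (simp add: monoM_Mab xv_def)
    also have "\<dots> = (\<Sum>M\<in>Ms p. a M * monoM (E xv) M)"
      using sum.reindex_bij_betw[OF bij_Mab, of "\<lambda>M. a M * monoM (E xv) M" p]
      by (simp add: case_prod_unfold)
    also have "\<dots> = 0" by (rule z[OF embed_Ec])
    finally show ?thesis .
  qed
  have "\<forall>(\<alpha>,\<beta>)\<in>Dp p. a (Mab \<alpha> \<beta>) = 0"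
    using multi_unique[OF finite_Dp bd, of "\<lambda>(\<alpha>,\<beta>). a (Mab \<alpha> \<beta>)"] zz by simp
  moreover have "(cp M, cm M) \<in> Dp p"
    using bij_betw_inv_into_right bij_Mab M
    by (auto simp: Dp_def Ms_def size_Mab[symmetric] Mab_cp_cm)
  ultimately have "a (Mab (cp M) (cm M)) = 0" by auto
  then show ?thesis using M by (simp add: Ms_def Mab_cp_cm)
qed

definition restr :: "(real^2) set \<Rightarrow> field \<Rightarrow> field" where
  "restr T \<Phi> = (\<lambda>k. if k \<in> T then \<Phi> k else 0)"

lemma restr_Ec:
  assumes "\<Phi> \<in> Ecs" "\<And>x. x \<in> T \<Longrightarrow> - x \<in> T"
  shows "restr T \<Phi> \<in> Ecs"
proof -
  have T: "- k \<in> T \<longleftrightarrow> k \<in> T" for k using assms(2) by (metis minus_minus)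
  show ?thesis using assms(1) by (auto simp: Ec_def restr_def T)
qed

lemma supp_restr: "supp (restr T \<Phi>) \<subseteq> T"
  by (auto simp: supp_def restr_def)

lemma monoM_restr: "monoM (restr T \<Phi>) M = (if set_mset M \<subseteq> T then monoM \<Phi> M else 0)"
proof (cases "set_mset M \<subseteq> T")
  case True
  then have "image_mset (restr T \<Phi>) M = image_mset \<Phi> M"
    by (intro image_mset_cong) (auto simp: restr_def)
  then show ?thesis using True by (simp add: monoM_def)
next
  case False
  then obtain x where "x \<in># M" "x \<notin> T" by auto
  then show ?thesis using False by (auto intro!: monoM_zero simp: restr_def)
qed

lemma Ec_unique_T:
  assumes T: "\<And>x. x \<in> T \<Longrightarrow> - x \<in> T"
    and z: "\<And>\<Phi>. \<Phi> \<in> Ecs \<Longrightarrow> supp \<Phi> \<subseteq> T \<Longrightarrow> (\<Sum>M\<in>Ms p. a M * monoM \<Phi> M) = 0"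
    and M: "M \<in> Ms p" "set_mset M \<subseteq> T"
  shows "a M = 0"
proof -
  define a' where "a' M = (if set_mset M \<subseteq> T then a M else 0)" for M
  have "a' M = 0"
  proof (rule Ec_unique[OF _ M(1)])
    fix \<Phi> assume \<Phi>: "\<Phi> \<in> Ecs"
    have "(\<Sum>M\<in>Ms p. a' M * monoM \<Phi> M) = (\<Sum>M\<in>Ms p. a M * monoM (restr T \<Phi>) M)"
      by (rule sum.cong[OF refl]) (simp add: a'_def monoM_restr)
    also have "\<dots> = 0" by (rule z[OF restr_Ec[OF \<Phi> T] supp_restr])
    finally show "(\<Sum>M\<in>Ms p. a' M * monoM \<Phi> M) = 0" .
  qed
  then show ?thesis using M(2) by (simp add: a'_def)
qed

end

lemma vec2_eqI: "(x::real^2)$1 = y$1 \<Longrightarrow> x$2 = y$2 \<Longrightarrow> x = y"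
  by (simp add: vec2_eq_iff)

lemma inner_vec2: "(u::real^2) \<bullet> v = u$1 * v$1 + u$2 * v$2"
  by (simp add: inner_vec_def sum_2)

lemma rot_comp: "rot \<theta> x $ 1 = cos \<theta> * x$1 - sin \<theta> * x$2" "rot \<theta> x $ 2 = sin \<theta> * x$1 + cos \<theta> * x$2"
  by (simp_all add: rot_def)

lemma gamma1_comp: "gamma1 x $ 1 = - x$1" "gamma1 x $ 2 = x$2"
  by (simp_all add: gamma1_def)

lemma linear_rot: "linear (rot \<theta>)"
  by (rule linearI) (auto intro!: vec2_eqI simp: rot_comp algebra_simps)

lemma orth_rot: "orthogonal_transformation (rot \<theta>)"
proof -
  have "norm (rot \<theta> v) = norm v" for v
  proof -
    have "(rot \<theta> v $ 1)^2 + (rot \<theta> v $ 2)^2 = (v$1^2 + v$2^2) * ((sin \<theta>)^2 + (cos \<theta>)^2)"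
      unfolding rot_comp by algebra
    also have "\<dots> = v$1^2 + v$2^2" by simp
    finally have eq: "(rot \<theta> v $ 1)^2 + (rot \<theta> v $ 2)^2 = v$1^2 + v$2^2" .
    show ?thesis unfolding norm_vec2 eq ..
  qed
  then show ?thesis using linear_rot by (simp add: orthogonal_transformation)
qed

lemma linear_gamma1: "linear gamma1"
  by (rule linearI) (auto intro!: vec2_eqI simp: gamma1_comp algebra_simps)

lemma orth_gamma1: "orthogonal_transformation gamma1"
  using linear_gamma1 by (simp add: orthogonal_transformation norm_vec2 gamma1_comp)

lemma gamma1_gamma1[simp]: "gamma1 (gamma1 x) = x"
  by (rule vec2_eqI) (simp_all add: gamma1_comp)

lemma inv_gamma1: "inv gamma1 = gamma1"
  by (metis gamma1_gamma1 inv_equality)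

lemma orth_classify:
  assumes h: "orthogonal_transformation h"
  shows "\<exists>\<theta>. h = rot \<theta> \<or> h = rot \<theta> \<circ> gamma1"
proof -
  define e1 where "e1 = (vector [1, 0] :: real^2)"
  define e2 where "e2 = (vector [0, 1] :: real^2)"
  define u where "u = h e1"
  define v where "v = h e2"
  have lin: "linear h" using h by (simp add: orthogonal_transformation)
  have inn: "h x \<bullet> h y = x \<bullet> y" for x y using h by (simp add: orthogonal_transformation_def)
  have dec: "x = x$1 *\<^sub>R e1 + x$2 *\<^sub>R e2" for x :: "real^2"
    by (rule vec2_eqI) (simp_all add: e1_def e2_def)
  have hx: "h x = x$1 *\<^sub>R u + x$2 *\<^sub>R v" for x
    by (subst dec) (simp add: linear_add[OF lin] linear_scale[OF lin] u_def v_def)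
  have uu: "u$1^2 + u$2^2 = 1" using inn[of e1 e1]
    by (simp add: u_def inner_vec2 e1_def power2_eq_square)
  have vv: "v$1^2 + v$2^2 = 1" using inn[of e2 e2]
    by (simp add: v_def inner_vec2 e2_def power2_eq_square)
  have uv: "u$1 * v$1 + u$2 * v$2 = 0" using inn[of e1 e2]
    by (simp add: u_def v_def inner_vec2 e1_def e2_def)
  obtain \<theta> where th: "u$1 = cos \<theta>" "u$2 = sin \<theta>" using sincos_total_2pi[OF uu] by metis
  define lam where "lam = v$2 * cos \<theta> - v$1 * sin \<theta>"
  have cs: "(cos \<theta>)^2 + (sin \<theta>)^2 = 1" by simp
  have v1: "v$1 = - lam * sin \<theta>"
  proof -
    have "v$1 = v$1 * ((cos \<theta>)^2 + (sin \<theta>)^2)" using cs by (simp only: mult_1_right)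
    also have "\<dots> = cos \<theta> * (u$1 * v$1 + u$2 * v$2) - lam * sin \<theta>"
      unfolding th lam_def by algebra
    finally show ?thesis using uv by simp
  qed
  have v2: "v$2 = lam * cos \<theta>"
  proof -
    have "v$2 = v$2 * ((cos \<theta>)^2 + (sin \<theta>)^2)" using cs by (simp only: mult_1_right)
    also have "\<dots> = sin \<theta> * (u$1 * v$1 + u$2 * v$2) + lam * cos \<theta>"
      unfolding th lam_def by algebra
    finally show ?thesis using uv by simp
  qed
  have "lam^2 = 1"
  proof -
    have "lam^2 * ((cos \<theta>)^2 + (sin \<theta>)^2) = v$1^2 + v$2^2" unfolding v1 v2 by algebra
    then have "lam^2 * ((cos \<theta>)^2 + (sin \<theta>)^2) = 1" using vv by simp
    then show ?thesis using cs by simp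
  qed
  then have "lam = 1 \<or> lam = -1" by (simp add: power2_eq_1_iff)
  then show ?thesis
  proof
    assume l: "lam = 1"
    have "h = rot \<theta>"
      by (rule ext, rule vec2_eqI) (simp_all add: hx rot_comp th v1 v2 l algebra_simps)
    then show ?thesis by blast
  next
    assume l: "lam = -1"
    have "h = rot (\<theta> + pi) \<circ> gamma1"
      by (rule ext, rule vec2_eqI) (simp_all add: hx rot_comp gamma1_comp th v1 v2 l algebra_simps)
    then show ?thesis by blast
  qed
qed

lemma act_apply: "act g \<Phi> k = \<Phi> (inv g k)"
  by (simp add: act_def)

lemma og_inv_f[simp]: "orthogonal_transformation (g::real^2\<Rightarrow>real^2) \<Longrightarrow> inv g (g x) = x"
  by (simp add: inv_f_f orthogonal_transformation_inj)

lemma og_f_inv[simp]: "orthogonal_transformation (g::real^2\<Rightarrow>real^2) \<Longrightarrow> g (inv g x) = x"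
  by (rule surj_f_inv_f[OF orthogonal_transformation_surj])

lemma og_neg: "orthogonal_transformation (g::real^2\<Rightarrow>real^2) \<Longrightarrow> g (- x) = - g x"
  by (simp add: linear_neg orthogonal_transformation_linear)

lemma og_img_inv[simp]: "orthogonal_transformation (g::real^2\<Rightarrow>real^2) \<Longrightarrow> image_mset g (image_mset (inv g) M) = M"
  by (simp add: multiset.map_comp comp_def)

lemma og_inv_img[simp]: "orthogonal_transformation (g::real^2\<Rightarrow>real^2) \<Longrightarrow> image_mset (inv g) (image_mset g M) = M"
  by (simp add: multiset.map_comp comp_def)

lemma monoM_act: "monoM (act g \<Phi>) M = monoM \<Phi> (image_mset (inv g) M)"
  by (simp add: monoM_def act_def multiset.map_comp comp_def)

context wsetup begin

lemma act_Ec: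
  assumes og: "orthogonal_transformation g" and \<Phi>: "\<Phi> \<in> Ecs" and sW: "\<And>x. x \<in> supp \<Phi> \<Longrightarrow> g x \<in> W"
  shows "act g \<Phi> \<in> Ecs"
proof -
  have "act g \<Phi> k \<noteq> 0 \<Longrightarrow> k \<in> W" for k
    using sW[of "inv g k"] og by (auto simp: act_apply supp_def)
  moreover have "act g \<Phi> (- k) = cnj (act g \<Phi> k)" for k
  proof -
    have oi: "orthogonal_transformation (inv g)" using og by (rule orthogonal_transformation_inv)
    have "inv g (- k) = - inv g k" by (rule og_neg[OF oi])
    then show ?thesis using Ec_cnj[OF \<Phi>] by (simp add: act_apply)
  qed
  ultimately show ?thesis by (auto simp: Ec_def W_def)
qed


lemma reindex_img:
  assumes og: "orthogonal_transformation g" and TW: "T \<subseteq> W" and gT: "\<And>x. x \<in> T \<Longrightarrow> g x \<in> W"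
  shows "(\<Sum>M\<in>{M \<in> Ms p. set_mset M \<subseteq> T}. f (image_mset g M)) = (\<Sum>M\<in>{M \<in> Ms p. set_mset M \<subseteq> g ` T}. f M)"
proof (rule sum.reindex_bij_betw)
  show "bij_betw (image_mset g) {M \<in> Ms p. set_mset M \<subseteq> T} {M \<in> Ms p. set_mset M \<subseteq> g ` T}"
  proof (rule bij_betw_byWitness[where f' = "image_mset (inv g)"])
    show "\<forall>a\<in>{M \<in> Ms p. set_mset M \<subseteq> T}. image_mset (inv g) (image_mset g a) = a" using og by simp
    show "\<forall>a'\<in>{M \<in> Ms p. set_mset M \<subseteq> g ` T}. image_mset g (image_mset (inv g) a') = a'" using og by simp
    show "image_mset g ` {M \<in> Ms p. set_mset M \<subseteq> T} \<subseteq> {M \<in> Ms p. set_mset M \<subseteq> g ` T}"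
      using gT by (auto simp: Ms_def) (blast intro: gT)+
    show "image_mset (inv g) ` {M \<in> Ms p. set_mset M \<subseteq> g ` T} \<subseteq> {M \<in> Ms p. set_mset M \<subseteq> T}"
    proof
      fix M' assume "M' \<in> image_mset (inv g) ` {M \<in> Ms p. set_mset M \<subseteq> g ` T}"
      then obtain M where M: "M \<in> Ms p" "set_mset M \<subseteq> g ` T" and M': "M' = image_mset (inv g) M" by auto
      have s: "set_mset M' \<subseteq> T"
      proof
        fix y assume "y \<in># M'"
        then obtain x where "x \<in># M" "y = inv g x" using M' by auto
        then obtain t where "t \<in> T" "x = g t" using M(2) by auto
        then show "y \<in> T" using \<open>y = inv g x\<close> og by simp
      qed
      have "size M' = p" using M M' by (simp add: Ms_def)
      then show "M' \<in> {M \<in> Ms p. set_mset M \<subseteq> T}" using s TW by (auto simp: Ms_def)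
    qed
  qed
qed

end

context ftsetup begin

lemma transfer:
  assumes og: "orthogonal_transformation g"
    and T: "\<And>x. x \<in> T \<Longrightarrow> - x \<in> T" and TW: "T \<subseteq> W" and gT: "\<And>x. x \<in> T \<Longrightarrow> g x \<in> W"
    and H: "\<And>\<Phi>. \<Phi> \<in> Ecs \<Longrightarrow> supp \<Phi> \<subseteq> T \<Longrightarrow> act g (E (Ft (C \<Phi>))) = E (Ft (C (act g \<Phi>)))"
    and M: "M \<in> Ms p" "set_mset M \<subseteq> T"
  shows "C0 (g k) (image_mset g M) = C0 k M"
proof -
  define S1 where "S1 = {M \<in> Ms p. set_mset M \<subseteq> T}"
  define S2 where "S2 = {M \<in> Ms p. set_mset M \<subseteq> g ` T}"
  have S1Ms: "S1 \<subseteq> Ms p" and S2Ms: "S2 \<subseteq> Ms p" by (auto simp: S1_def S2_def)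
  define a where "a M = (if set_mset M \<subseteq> T then C0 (g k) (image_mset g M) - C0 k M else 0)" for M
  have "a M = 0"
  proof (rule Ec_unique_T[OF T _ M])
    fix \<Phi> assume \<Phi>: "\<Phi> \<in> Ecs" and sT: "supp \<Phi> \<subseteq> T"
    have g\<Phi>: "act g \<Phi> \<in> Ecs" by (rule act_Ec[OF og \<Phi>]) (use sT gT in auto)
    have L: "(\<Sum>M\<in>Ms p. C0 k M * monoM \<Phi> M) = (\<Sum>M\<in>S1. C0 k M * monoM \<Phi> M)"
    proof (rule sum.mono_neutral_right[OF finite_Ms S1Ms], rule ballI)
      fix M assume "M \<in> Ms p - S1"
      then have "\<not> set_mset M \<subseteq> supp \<Phi>" using sT by (auto simp: S1_def)
      then show "C0 k M * monoM \<Phi> M = 0" by (simp add: monoM_nonsupp)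
    qed
    have R: "(\<Sum>M\<in>Ms p. C0 (g k) M * monoM (act g \<Phi>) M) = (\<Sum>M\<in>S1. C0 (g k) (image_mset g M) * monoM \<Phi> M)"
    proof -
      have "(\<Sum>M\<in>Ms p. C0 (g k) M * monoM (act g \<Phi>) M) = (\<Sum>M\<in>S2. C0 (g k) M * monoM (act g \<Phi>) M)"
      proof (rule sum.mono_neutral_right[OF finite_Ms S2Ms], rule ballI)
        fix M assume "M \<in> Ms p - S2"
        then obtain x where x: "x \<in># M" "x \<notin> g ` T" by (auto simp: S2_def Ms_def)
        have "inv g x \<notin> T"
        proof
          assume "inv g x \<in> T"
          then have "g (inv g x) \<in> g ` T" by blast
          then show False using x(2) og by simp
        qed
        then have "act g \<Phi> x = 0" using sT by (auto simp: act_apply supp_def)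
        then show "C0 (g k) M * monoM (act g \<Phi>) M = 0" using monoM_zero[OF x(1)] by simp
      qed
      also have "\<dots> = (\<Sum>M\<in>S1. C0 (g k) (image_mset g M) * monoM (act g \<Phi>) (image_mset g M))"
        unfolding S1_def S2_def
        by (rule reindex_img[OF og TW gT, where f = "\<lambda>M. C0 (g k) M * monoM (act g \<Phi>) M", symmetric])
      also have "\<dots> = (\<Sum>M\<in>S1. C0 (g k) (image_mset g M) * monoM \<Phi> M)"
        using og by (simp add: monoM_act)
      finally show ?thesis .
    qed
    have eq: "(\<Sum>M\<in>Ms p. C0 k M * monoM \<Phi> M) = (\<Sum>M\<in>Ms p. C0 (g k) M * monoM (act g \<Phi>) M)"
    proof -
      have "(\<Sum>M\<in>Ms p. C0 k M * monoM \<Phi> M) = E (Ft (C \<Phi>)) k" by (simp add: rep[OF \<Phi>])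
      also have "\<dots> = act g (E (Ft (C \<Phi>))) (g k)" using og by (simp add: act_apply)
      also have "\<dots> = E (Ft (C (act g \<Phi>))) (g k)" by (simp add: H[OF \<Phi> sT])
      also have "\<dots> = (\<Sum>M\<in>Ms p. C0 (g k) M * monoM (act g \<Phi>) M)" by (simp add: rep[OF g\<Phi>])
      finally show ?thesis .
    qed
    have "(\<Sum>M\<in>Ms p. a M * monoM \<Phi> M) = (\<Sum>M\<in>S1. a M * monoM \<Phi> M)"
      by (rule sum.mono_neutral_right[OF finite_Ms S1Ms]) (auto simp: a_def S1_def)
    also have "\<dots> = (\<Sum>M\<in>S1. C0 (g k) (image_mset g M) * monoM \<Phi> M - C0 k M * monoM \<Phi> M)"
      by (rule sum.cong[OF refl]) (auto simp: a_def S1_def algebra_simps)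
    also have "\<dots> = 0" using L R eq by (simp add: sum_subtractf)
    finally show "(\<Sum>M\<in>Ms p. a M * monoM \<Phi> M) = 0" .
  qed
  then show ?thesis using M by (simp add: a_def)
qed

end

lemma gamma1_neg: "gamma1 (- x) = - gamma1 x"
  by (rule vec2_eqI) (simp_all add: gamma1_comp)

lemma rot_neg: "rot \<theta> (- x) = - rot \<theta> x"
  by (rule vec2_eqI) (simp_all add: rot_comp)

definition ex :: "real \<Rightarrow> real \<Rightarrow> real^2 \<Rightarrow> complex" where
  "ex s t k = exp (- \<i> * complex_of_real (s * k$1 + t * k$2))"

lemma transl_ex: "transl s t a k = ex s t k * a k"
  by (simp add: transl_def ex_def)

lemma ex_add: "ex s t (x + y) = ex s t x * ex s t y"
  by (simp add: ex_def algebra_simps exp_add[symmetric])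

lemma ex_neg: "ex s t (- x) = cnj (ex s t x)"
proof -
  have 1: "ex s t (- x) = exp (\<i> * complex_of_real (s * x$1 + t * x$2))"
    unfolding ex_def by (simp add: algebra_simps)
  have 2: "cnj (ex s t x) = exp (\<i> * complex_of_real (s * x$1 + t * x$2))"
    unfolding ex_def exp_cnj by simp
  show ?thesis using 1 2 by simp
qed

lemma ex_nz: "ex s t x \<noteq> 0"
  by (simp add: ex_def)

lemma monoM_transl: "monoM (transl s t \<Phi>) M = ex s t (sum_mset M) * monoM \<Phi> M"
  by (induction M) (auto simp: monoM_def transl_ex ex_add ex_def[of _ _ 0])

lemma ex_const_imp:
  assumes "\<And>s t. ex s t d = 1"
  shows "d = 0"
proof (rule ccontr)
  assume d: "d \<noteq> 0"
  define n where "n = d$1^2 + d$2^2"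
  have "n \<noteq> 0"
  proof
    assume "n = 0"
    then have "d$1 = 0" "d$2 = 0" unfolding n_def by (simp_all add: sum_power2_eq_zero_iff)
    then show False using d by (simp add: vec2_eq_iff)
  qed
  define s where "s = pi * d$1 / n"
  define t where "t = pi * d$2 / n"
  have "s * d$1 + t * d$2 = pi * (d$1^2 + d$2^2) / n"
    by (simp add: s_def t_def power2_eq_square add_divide_distrib algebra_simps)
  also have "\<dots> = pi" using \<open>n \<noteq> 0\<close> by (simp add: n_def)
  finally have "ex s t d = exp (- \<i> * complex_of_real pi)" by (simp add: ex_def)
  also have "\<dots> = -1" by (simp add: exp_minus)
  finally show False using assms[of s t] by simp
qed

context wsetup begin

lemma gamma1_w: "gamma1 (w i) \<in> W"
proof -
  have "gamma1 (w 0) = - w 5" "gamma1 (w 1) = - w 1" "gamma1 (w 2) = w 2"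
    "gamma1 (w 3) = - w 4" "gamma1 (w 4) = - w 3" "gamma1 (w 5) = - w 0"
    by (auto intro!: vec2_eqI simp: gamma1_comp w_simps)
  then show ?thesis using exhaust_6[of i] by (auto simp: W_def)
qed

lemma gamma1_W: "x \<in> W \<Longrightarrow> gamma1 x \<in> W"
  by (erule W_cases) (auto simp: gamma1_w gamma1_neg intro: W_neg)

lemma transl_Ec: "\<Phi> \<in> Ecs \<Longrightarrow> transl s t \<Phi> \<in> Ecs"
  by (auto simp: Ec_def transl_ex ex_neg ex_nz)

end

locale ftfull = ftsetup +
  assumes Geq: "Gamma_equivariant l1 l2 n2 Ft"
    and rotH: "\<forall>\<theta> :: real. \<forall>\<Phi>\<in>Ec l1 l2 n2. act (rot \<theta>) \<Phi> \<in> Ec l1 l2 n2 \<longrightarrow>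
             act (rot \<theta>) (embed l1 l2 n2 (Ft (coords l1 l2 n2 \<Phi>)))
               = embed l1 l2 n2 (Ft (coords l1 l2 n2 (act (rot \<theta>) \<Phi>)))"
begin

lemma C0_gamma1:
  assumes M: "M \<in> Ms p"
  shows "C0 (gamma1 k) (image_mset gamma1 M) = C0 k M"
proof (rule transfer[OF orth_gamma1 _ _ _ _ M])
  show "\<And>x. x \<in> W \<Longrightarrow> - x \<in> W" by (rule W_neg)
  show "W \<subseteq> W" by simp
  show "\<And>x. x \<in> W \<Longrightarrow> gamma1 x \<in> W" by (rule gamma1_W)
  show "set_mset M \<subseteq> W" using M by (simp add: Ms_def)
  fix \<Phi> assume \<Phi>: "\<Phi> \<in> Ecs" and "supp \<Phi> \<subseteq> W"
  define x where "x = C \<Phi>"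
  have Ex: "E x = \<Phi>" by (simp add: x_def embed_coords[OF \<Phi>])
  have g: "Ft (C (act gamma1 (E x))) = C (act gamma1 (E (Ft x)))"
    using Geq by (simp add: Gamma_equivariant_def)
  have "act gamma1 (E (Ft x)) \<in> Ecs"
    by (rule act_Ec[OF orth_gamma1 embed_Ec]) (use Ec_supp[OF embed_Ec] gamma1_W in blast)
  then have "E (C (act gamma1 (E (Ft x)))) = act gamma1 (E (Ft x))" by (rule embed_coords)
  then show "act gamma1 (E (Ft (C \<Phi>))) = E (Ft (C (act gamma1 \<Phi>)))"
    using g Ex by (simp add: x_def)
qed

lemma C0_rot:
  assumes M: "M \<in> Ms p" and hW: "\<And>x. x \<in># M \<Longrightarrow> rot \<theta> x \<in> W"
  shows "C0 (rot \<theta> k) (image_mset (rot \<theta>) M) = C0 k M"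
proof (rule transfer[OF orth_rot, where T = "{x \<in> W. rot \<theta> x \<in> W}", OF _ _ _ _ M])
  show "\<And>x. x \<in> {x \<in> W. rot \<theta> x \<in> W} \<Longrightarrow> - x \<in> {x \<in> W. rot \<theta> x \<in> W}"
    by (auto simp: W_neg rot_neg)
  show "{x \<in> W. rot \<theta> x \<in> W} \<subseteq> W" by auto
  show "\<And>x. x \<in> {x \<in> W. rot \<theta> x \<in> W} \<Longrightarrow> rot \<theta> x \<in> W" by auto
  show "set_mset M \<subseteq> {x \<in> W. rot \<theta> x \<in> W}" using M hW by (auto simp: Ms_def)
  fix \<Phi> assume \<Phi>: "\<Phi> \<in> Ecs" and s: "supp \<Phi> \<subseteq> {x \<in> W. rot \<theta> x \<in> W}"
  have "act (rot \<theta>) \<Phi> \<in> Ecs" by (rule act_Ec[OF orth_rot \<Phi>]) (use s in auto)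
  then show "act (rot \<theta>) (E (Ft (C \<Phi>))) = E (Ft (C (act (rot \<theta>) \<Phi>)))"
    using rotH \<Phi> by blast
qed

lemma C0_inv:
  assumes h: "orthogonal_transformation h" and M: "M \<in> Ms p" and hW: "\<And>x. x \<in># M \<Longrightarrow> h x \<in> W"
  shows "C0 (h k) (image_mset h M) = C0 k M"
proof -
  obtain \<theta> where "h = rot \<theta> \<or> h = rot \<theta> \<circ> gamma1" using orth_classify[OF h] by blast
  then show ?thesis
  proof
    assume "h = rot \<theta>"
    then show ?thesis using C0_rot[OF M] hW by simp
  next
    assume hh: "h = rot \<theta> \<circ> gamma1"
    have M': "image_mset gamma1 M \<in> Ms p" using M gamma1_W by (auto simp: Ms_def)
    have "C0 (rot \<theta> (gamma1 k)) (image_mset (rot \<theta>) (image_mset gamma1 M)) = C0 (gamma1 k) (image_mset gamma1 M)"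
      by (rule C0_rot[OF M']) (use hW hh in auto)
    also have "\<dots> = C0 k M" by (rule C0_gamma1[OF M])
    finally show ?thesis by (simp add: hh multiset.map_comp)
  qed
qed

lemma C0_sum:
  assumes M: "M \<in> Ms p" and nz: "C0 k M \<noteq> 0"
  shows "sum_mset M = k"
proof -
  have "C0 k M * (ex s t (sum_mset M) - ex s t k) = 0" for s t
  proof (rule Ec_unique[OF _ M, where a = "\<lambda>M. C0 k M * (ex s t (sum_mset M) - ex s t k)"])
    fix \<Phi> assume \<Phi>: "\<Phi> \<in> Ecs"
    have g: "Ft (C (transl s t (E (C \<Phi>)))) = C (transl s t (E (Ft (C \<Phi>))))"
      using Geq by (simp add: Gamma_equivariant_def)
    have "E (Ft (C (transl s t \<Phi>))) = transl s t (E (Ft (C \<Phi>)))"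
      using g embed_coords[OF \<Phi>] embed_coords[OF transl_Ec[OF embed_Ec]] by metis
    then have "E (Ft (C (transl s t \<Phi>))) k = ex s t k * E (Ft (C \<Phi>)) k"
      by (simp add: transl_ex)
    then have "(\<Sum>M\<in>Ms p. C0 k M * (ex s t (sum_mset M) * monoM \<Phi> M)) = ex s t k * (\<Sum>M\<in>Ms p. C0 k M * monoM \<Phi> M)"
      by (simp add: rep[OF \<Phi>] rep[OF transl_Ec[OF \<Phi>]] monoM_transl)
    then show "(\<Sum>M\<in>Ms p. C0 k M * (ex s t (sum_mset M) - ex s t k) * monoM \<Phi> M) = 0"
      by (simp add: sum_distrib_left algebra_simps sum_subtractf)
  qed
  then have "ex s t (sum_mset M) = ex s t k" for s t using nz by simp
  then have "ex s t (sum_mset M - k) = 1" for s t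
    using ex_add[of s t "sum_mset M - k" k] ex_nz[of s t k] by (simp add: field_simps)
  then have "sum_mset M - k = 0" by (rule ex_const_imp)
  then show ?thesis by simp
qed

end

definition NL :: "(real^2) multiset \<Rightarrow> nat" where
  "NL M = card {ks. mset ks = M}"

lemma finite_NL: "finite {ks. mset ks = M}"
proof -
  have "{ks. mset ks = M} \<subseteq> {ks. set ks \<subseteq> set_mset M \<and> length ks = size M}" by auto
  then show ?thesis by (rule finite_subset) (simp add: finite_lists_length_eq)
qed

lemma NL_pos: "NL M > 0"
proof -
  obtain ks where "mset ks = M" using ex_mset by blast
  then have "{ks. mset ks = M} \<noteq> {}" by auto
  then show ?thesis using finite_NL by (simp add: NL_def card_gt_0_iff)
qed

lemma NL_img:
  assumes og: "orthogonal_transformation (h::real^2\<Rightarrow>real^2)"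
  shows "NL (image_mset h M) = NL M"
proof -
  have "bij_betw (map h) {ks. mset ks = M} {ks. mset ks = image_mset h M}"
  proof (rule bij_betw_byWitness[where f' = "map (inv h)"])
    show "\<forall>a\<in>{ks. mset ks = M}. map (inv h) (map h a) = a" using og by (simp add: map_idI)
    show "\<forall>a'\<in>{ks. mset ks = image_mset h M}. map h (map (inv h) a') = a'" using og by (simp add: map_idI)
    show "map h ` {ks. mset ks = M} \<subseteq> {ks. mset ks = image_mset h M}" by auto
    show "map (inv h) ` {ks. mset ks = image_mset h M} \<subseteq> {ks. mset ks = M}" using og by auto
  qed
  then show ?thesis by (simp add: NL_def bij_betw_same_card)
qed

lemma sum_mset_linear: "linear g \<Longrightarrow> sum_mset (image_mset g M) = g (sum_mset M)"
  by (induction M) (auto simp: linear_add linear_0)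

lemma ex_0: "ex s t 0 = 1"
  by (simp add: ex_def)

lemma prod_list_transl: "prod_list (map (transl s t a) ks) = ex s t (sum_list ks) * prod_list (map a ks)"
  by (induction ks) (simp_all add: transl_ex ex_add ex_0)

context ftfull begin

definition "valid (M::(real^2) multiset) (g::real^2\<Rightarrow>real^2) \<longleftrightarrow> orthogonal_transformation g \<and> (\<forall>x\<in>#M. g x \<in> W)"

definition "Cx k M = (if size M = p \<and> (\<exists>g. valid M g) then
    C0 ((SOME g. valid M g) k) (image_mset (SOME g. valid M g) M) else 0)"

definition "PP k ks = Cx k (mset ks) / of_nat (NL (mset ks))"

definition "FF a = (\<lambda>k. if k \<in> circ (real_of_int l1) then
     (\<Sum>ks\<in>{ks. length ks = p \<and> set ks \<subseteq> supp a}. PP k ks * prod_list (map a ks)) else 0)"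

lemma valid_Ms: "size M = p \<Longrightarrow> valid M g \<Longrightarrow> image_mset g M \<in> Ms p"
  by (auto simp: valid_def Ms_def)

lemma Cx_valid: "size M = p \<Longrightarrow> valid M g \<Longrightarrow> Cx k M = C0 (g k) (image_mset g M)"
proof -
  assume sz: "size M = p" and v: "valid M g"
  define g0 where "g0 = (SOME g. valid M g)"
  have v0: "valid M g0" unfolding g0_def using v by (rule someI[of "valid M"])
  have Cx: "Cx k M = C0 (g0 k) (image_mset g0 M)" using sz v by (auto simp: Cx_def g0_def)
  define q where "q = g \<circ> inv g0"
  have og0: "orthogonal_transformation g0" "orthogonal_transformation g" using v v0 by (auto simp: valid_def)
  have oq: "orthogonal_transformation q" unfolding q_def
    by (intro orthogonal_transformation_compose orthogonal_transformation_inv og0)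
  have M0: "image_mset g0 M \<in> Ms p" by (rule valid_Ms[OF sz v0])
  have "C0 (q (g0 k)) (image_mset q (image_mset g0 M)) = C0 (g0 k) (image_mset g0 M)"
    by (rule C0_inv[OF oq M0]) (use v og0 in \<open>auto simp: q_def valid_def\<close>)
  moreover have "q (g0 k) = g k" "image_mset q (image_mset g0 M) = image_mset g M"
    using og0 by (auto simp: q_def multiset.map_comp comp_def)
  ultimately show ?thesis using Cx by simp
qed

lemma Cx_C0: "M \<in> Ms p \<Longrightarrow> Cx k M = C0 k M"
proof -
  assume M: "M \<in> Ms p"
  have v: "valid M (\<lambda>x. x)" using M by (auto simp: valid_def Ms_def orthogonal_transformation_id)
  have "size M = p" using M by (simp add: Ms_def)
  then show ?thesis using Cx_valid[OF _ v] by simp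
qed

lemma Cx_inv:
  assumes h: "orthogonal_transformation (h::real^2\<Rightarrow>real^2)"
  shows "Cx (h k) (image_mset h M) = Cx k M"
proof (cases "size M = p \<and> (\<exists>g. valid M g)")
  case True
  then obtain g where sz: "size M = p" and v: "valid M g" by blast
  have og: "orthogonal_transformation g" using v by (simp add: valid_def)
  have oi: "orthogonal_transformation (g \<circ> inv h)"
    by (rule orthogonal_transformation_compose[OF og orthogonal_transformation_inv[OF h]])
  have v': "valid (image_mset h M) (g \<circ> inv h)" using v h oi by (auto simp: valid_def)
  have "Cx (h k) (image_mset h M) = C0 ((g \<circ> inv h) (h k)) (image_mset (g \<circ> inv h) (image_mset h M))"
    by (rule Cx_valid) (use sz v' in \<open>auto simp: comp_def\<close>)
  also have "\<dots> = C0 (g k) (image_mset g M)" using h by (simp add: multiset.map_comp comp_def)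
  also have "\<dots> = Cx k M" by (rule Cx_valid[OF sz v, symmetric])
  finally show ?thesis .
next
  case False
  have nh: "\<not> (size (image_mset h M) = p \<and> (\<exists>g. valid (image_mset h M) g))"
  proof
    assume "size (image_mset h M) = p \<and> (\<exists>g. valid (image_mset h M) g)"
    then obtain g where "size M = p" "valid (image_mset h M) g" by auto
    then have "valid M (g \<circ> h)" using h
      by (auto simp: valid_def intro: orthogonal_transformation_compose)
    then show False using False \<open>size M = p\<close> by blast
  qed
  have A: "Cx (h k) (image_mset h M) = 0" unfolding Cx_def by (rule if_not_P[OF nh])
  have B: "Cx k M = 0" unfolding Cx_def by (rule if_not_P[OF False])
  show ?thesis using A B by simp
qed

lemma Cx_sum: "Cx k M \<noteq> 0 \<Longrightarrow> sum_mset M = k"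
proof -
  assume nz: "Cx k M \<noteq> 0"
  then obtain g where sz: "size M = p" and v: "valid M g" by (auto simp: Cx_def split: if_splits)
  have og: "orthogonal_transformation g" using v by (simp add: valid_def)
  have "C0 (g k) (image_mset g M) \<noteq> 0" using nz Cx_valid[OF sz v] by simp
  then have "sum_mset (image_mset g M) = g k" by (rule C0_sum[OF valid_Ms[OF sz v], rotated])
  then have "g (sum_mset M) = g k"
    using sum_mset_linear[OF orthogonal_transformation_linear[OF og]] by simp
  then show ?thesis using orthogonal_transformation_inj[OF og] by (simp add: inj_eq)
qed

lemma PP_inv: "orthogonal_transformation (h::real^2\<Rightarrow>real^2) \<Longrightarrow> PP (h k) (map h ks) = PP k ks"
  by (simp add: PP_def Cx_inv NL_img)

lemma PP_sum: "PP k ks \<noteq> 0 \<Longrightarrow> sum_list ks = k"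
  using Cx_sum[of k "mset ks"] by (auto simp: PP_def sum_mset_sum_list)

lemma lists_to_msets:
  assumes fin: "finite S"
  shows "(\<Sum>ks\<in>{ks. length ks = p \<and> set ks \<subseteq> S}. PP k ks * prod_list (map a ks))
       = (\<Sum>M\<in>{M. set_mset M \<subseteq> S \<and> size M = p}. Cx k M * monoM a M)"
proof -
  define L where "L = {ks. length ks = p \<and> set ks \<subseteq> S}"
  have finL: "finite L" unfolding L_def using finite_lists_length_eq[OF fin, of p] by (simp add: conj_commute)
  have img: "mset ` L = {M. set_mset M \<subseteq> S \<and> size M = p}"
  proof
    show "mset ` L \<subseteq> {M. set_mset M \<subseteq> S \<and> size M = p}" by (auto simp: L_def)
    show "{M. set_mset M \<subseteq> S \<and> size M = p} \<subseteq> mset ` L"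
    proof
      fix M assume M: "M \<in> {M. set_mset M \<subseteq> S \<and> size M = p}"
      obtain ks where ks: "mset ks = M" using ex_mset by blast
      then have "ks \<in> L" using M by (auto simp: L_def)
      then show "M \<in> mset ` L" using ks by blast
    qed
  qed
  have "(\<Sum>ks\<in>L. PP k ks * prod_list (map a ks)) = (\<Sum>M\<in>mset ` L. \<Sum>ks\<in>{ks \<in> L. mset ks = M}. PP k ks * prod_list (map a ks))"
    by (rule sum.image_gen[OF finL])
  also have "\<dots> = (\<Sum>M\<in>mset ` L. Cx k M * monoM a M)"
  proof (rule sum.cong[OF refl])
    fix M assume "M \<in> mset ` L"
    then obtain x where x: "M = mset x" "x \<in> L" by blast
    have "ks \<in> L" if "mset ks = M" for ks
    proof -
      have "length ks = length x" using x that by (metis size_mset)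
      moreover have "set ks = set x" using x that by (metis set_mset_mset)
      ultimately show ?thesis using x(2) by (simp add: L_def)
    qed
    then have MLe: "{ks \<in> L. mset ks = M} = {ks. mset ks = M}" by auto
    have "(\<Sum>ks\<in>{ks \<in> L. mset ks = M}. PP k ks * prod_list (map a ks))
        = (\<Sum>ks\<in>{ks. mset ks = M}. Cx k M / of_nat (NL M) * monoM a M)"
      unfolding MLe by (rule sum.cong[OF refl]) (auto simp: PP_def monoM_def prod_mset_prod_list[symmetric])
    also have "\<dots> = of_nat (NL M) * (Cx k M / of_nat (NL M) * monoM a M)"
      by (simp add: NL_def)
    also have "\<dots> = Cx k M * monoM a M" using NL_pos[of M] by simp
    finally show "(\<Sum>ks\<in>{ks \<in> L. mset ks = M}. PP k ks * prod_list (map a ks)) = Cx k M * monoM a M" .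
  qed
  finally show ?thesis unfolding L_def[symmetric] img .
qed

lemma FF_restrict:
  assumes \<Phi>: "\<Phi> \<in> Ecs"
  shows "FF \<Phi> = E (Ft (C \<Phi>))"
proof
  fix k
  show "FF \<Phi> k = E (Ft (C \<Phi>)) k"
  proof (cases "k \<in> circ (real_of_int l1)")
    case False
    then have "k \<notin> W" using W_circ by blast
    then show ?thesis using False by (simp add: FF_def embed_out)
  next
    case True
    have sW: "supp \<Phi> \<subseteq> W" by (rule Ec_supp[OF \<Phi>])
    have finS: "finite (supp \<Phi>)" using finite_subset[OF sW finite_W] .
    have sub: "{M. set_mset M \<subseteq> supp \<Phi> \<and> size M = p} \<subseteq> Ms p" using sW by (auto simp: Ms_def)
    have "FF \<Phi> k = (\<Sum>M\<in>{M. set_mset M \<subseteq> supp \<Phi> \<and> size M = p}. Cx k M * monoM \<Phi> M)"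
      using True by (simp add: FF_def lists_to_msets[OF finS])
    also have "\<dots> = (\<Sum>M\<in>Ms p. Cx k M * monoM \<Phi> M)"
    proof (rule sum.mono_neutral_left[OF finite_Ms sub], rule ballI)
      fix M assume "M \<in> Ms p - {M. set_mset M \<subseteq> supp \<Phi> \<and> size M = p}"
      then have "\<not> set_mset M \<subseteq> supp \<Phi>" by (auto simp: Ms_def)
      then show "Cx k M * monoM \<Phi> M = 0" by (simp add: monoM_nonsupp)
    qed
    also have "\<dots> = (\<Sum>M\<in>Ms p. C0 k M * monoM \<Phi> M)"
      by (rule sum.cong[OF refl]) (simp add: Cx_C0)
    also have "\<dots> = E (Ft (C \<Phi>)) k" by (simp add: rep[OF \<Phi>])
    finally show ?thesis .
  qed
qed

lemma FF_poly: "poly_vf (real_of_int l1) p FF"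
  unfolding poly_vf_def by (rule exI[of _ PP]) (simp add: FF_def)

lemma supp_act: "orthogonal_transformation (g::real^2\<Rightarrow>real^2) \<Longrightarrow> supp (act g a) = g ` supp a"
  by (auto simp: supp_def act_apply image_iff) (metis og_f_inv)

lemma supp_transl: "supp (transl s t a) = supp a"
  by (auto simp: supp_def transl_ex ex_nz)

lemma FF_act:
  assumes og: "orthogonal_transformation (g::real^2\<Rightarrow>real^2)"
  shows "FF (act g a) = act g (FF a)"
proof
  fix k
  have oi: "orthogonal_transformation (inv g)" by (rule orthogonal_transformation_inv[OF og])
  have circ: "inv g k \<in> circ (real_of_int l1) \<longleftrightarrow> k \<in> circ (real_of_int l1)"
    using orthogonal_transformation_norm[OF oi] by (simp add: circ_def)
  have "(\<Sum>ks\<in>{ks. length ks = p \<and> set ks \<subseteq> supp (act g a)}. PP k ks * prod_list (map (act g a) ks))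
      = (\<Sum>ks\<in>{ks. length ks = p \<and> set ks \<subseteq> supp a}. PP (inv g k) ks * prod_list (map a ks))"
  proof (rule sum.reindex_bij_witness[where i = "map g" and j = "map (inv g)"])
    fix ks assume ks: "ks \<in> {ks. length ks = p \<and> set ks \<subseteq> supp (act g a)}"
    show "map g (map (inv g) ks) = ks" using og by (simp add: map_idI)
    show "map (inv g) ks \<in> {ks. length ks = p \<and> set ks \<subseteq> supp a}"
      using ks og by (auto simp: supp_act)
    show "PP (inv g k) (map (inv g) ks) * prod_list (map a (map (inv g) ks)) = PP k ks * prod_list (map (act g a) ks)"
      using PP_inv[OF oi, of k ks] by (simp add: act_def comp_def)
  next
    fix ks assume ks: "ks \<in> {ks. length ks = p \<and> set ks \<subseteq> supp a}"
    show "map (inv g) (map g ks) = ks" using og by (simp add: map_idI)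
    show "map g ks \<in> {ks. length ks = p \<and> set ks \<subseteq> supp (act g a)}"
      using ks og by (auto simp: supp_act)
  qed
  then show "FF (act g a) k = act g (FF a) k"
    using circ by (simp add: FF_def act_apply)
qed

lemma FF_transl: "FF (transl s t a) = transl s t (FF a)"
proof
  fix k
  have "(\<Sum>ks\<in>{ks. length ks = p \<and> set ks \<subseteq> supp a}. PP k ks * prod_list (map (transl s t a) ks))
      = (\<Sum>ks\<in>{ks. length ks = p \<and> set ks \<subseteq> supp a}. ex s t k * (PP k ks * prod_list (map a ks)))"
  proof (rule sum.cong[OF refl])
    fix ks
    show "PP k ks * prod_list (map (transl s t a) ks) = ex s t k * (PP k ks * prod_list (map a ks))"
    proof (cases "PP k ks = 0")
      case True then show ?thesis by simp
    next
      case False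
      then have "sum_list ks = k" by (rule PP_sum)
      then show ?thesis by (simp add: prod_list_transl)
    qed
  qed
  then show "FF (transl s t a) k = transl s t (FF a) k"
    by (simp add: FF_def supp_transl transl_ex sum_distrib_left)
qed

lemma FF_E2: "E2_equivariant (real_of_int l1) FF"
  by (simp add: E2_equivariant_def FF_act FF_transl)

end

theorem mainTheorem18:
  fixes l1 l2 n2 :: int and p :: nat and Ft :: "complex^6 \<Rightarrow> complex^6"
  assumes "l1 > l2" and "l2 > n2" and "n2 > 0" and "l1^2 = l2^2 + n2^2"
    and "hom_poly_map p Ft"
    and "Gamma_equivariant l1 l2 n2 Ft"
  shows "(\<exists>F. poly_vf (real_of_int l1) p F \<and> E2_equivariant (real_of_int l1) F \<and>
             (\<forall>\<Phi>\<in>Ec l1 l2 n2. F \<Phi> = embed l1 l2 n2 (Ft (coords l1 l2 n2 \<Phi>))))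
         \<longleftrightarrow>
         (\<forall>\<theta> :: real. \<forall>\<Phi>\<in>Ec l1 l2 n2. act (rot \<theta>) \<Phi> \<in> Ec l1 l2 n2 \<longrightarrow>
             act (rot \<theta>) (embed l1 l2 n2 (Ft (coords l1 l2 n2 \<Phi>)))
               = embed l1 l2 n2 (Ft (coords l1 l2 n2 (act (rot \<theta>) \<Phi>))))"
proof -
  interpret wsetup l1 l2 n2 by unfold_locales (use assms in auto)
  show ?thesis
  proof
    assume "\<exists>F. poly_vf (real_of_int l1) p F \<and> E2_equivariant (real_of_int l1) F \<and>
             (\<forall>\<Phi>\<in>Ec l1 l2 n2. F \<Phi> = embed l1 l2 n2 (Ft (coords l1 l2 n2 \<Phi>)))"
    then obtain F where E2: "E2_equivariant (real_of_int l1) F"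
      and res: "\<forall>\<Phi>\<in>Ec l1 l2 n2. F \<Phi> = embed l1 l2 n2 (Ft (coords l1 l2 n2 \<Phi>))" by blast
    show "\<forall>\<theta> :: real. \<forall>\<Phi>\<in>Ec l1 l2 n2. act (rot \<theta>) \<Phi> \<in> Ec l1 l2 n2 \<longrightarrow>
             act (rot \<theta>) (embed l1 l2 n2 (Ft (coords l1 l2 n2 \<Phi>)))
               = embed l1 l2 n2 (Ft (coords l1 l2 n2 (act (rot \<theta>) \<Phi>)))"
    proof (intro allI ballI impI)
      fix \<theta> :: real and \<Phi> assume \<Phi>: "\<Phi> \<in> Ec l1 l2 n2" and r: "act (rot \<theta>) \<Phi> \<in> Ec l1 l2 n2"
      have "F (act (rot \<theta>) \<Phi>) = act (rot \<theta>) (F \<Phi>)"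
        using E2 Ec_finsupp[OF \<Phi>] orth_rot by (simp add: E2_equivariant_def)
      then show "act (rot \<theta>) (embed l1 l2 n2 (Ft (coords l1 l2 n2 \<Phi>)))
               = embed l1 l2 n2 (Ft (coords l1 l2 n2 (act (rot \<theta>) \<Phi>)))"
        using res \<Phi> r by simp
    qed
  next
    assume R: "\<forall>\<theta> :: real. \<forall>\<Phi>\<in>Ec l1 l2 n2. act (rot \<theta>) \<Phi> \<in> Ec l1 l2 n2 \<longrightarrow>
             act (rot \<theta>) (embed l1 l2 n2 (Ft (coords l1 l2 n2 \<Phi>)))
               = embed l1 l2 n2 (Ft (coords l1 l2 n2 (act (rot \<theta>) \<Phi>)))"
    obtain c where c: "\<forall>x. Ft x = (\<Sum>(\<alpha>,\<beta>)\<in>{(\<alpha>,\<beta>). (\<Sum>i\<in>UNIV. \<alpha> i) + (\<Sum>i\<in>UNIV. \<beta> i) = p}.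
                   (\<Prod>i\<in>UNIV. x$i ^ \<alpha> i * cnj (x$i) ^ \<beta> i) *s c \<alpha> \<beta>)"
      using assms(5) by (auto simp: hom_poly_map_def)
    interpret ftfull l1 l2 n2 p Ft c
      by unfold_locales (use c assms(6) R in auto)
    show "\<exists>F. poly_vf (real_of_int l1) p F \<and> E2_equivariant (real_of_int l1) F \<and>
             (\<forall>\<Phi>\<in>Ec l1 l2 n2. F \<Phi> = embed l1 l2 n2 (Ft (coords l1 l2 n2 \<Phi>)))"
      using FF_poly FF_E2 FF_restrict by blast
  qed
qed

end
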